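(* For every $n\ge 1$, $$\sum_{P\in PF_n}c^{\operatorname{critic}(P)}u^{\operatorname{lucky}(P)}=cu\prod_{i=1}^{n-1}\bigl(i+(n-i)u+cu\bigr).$$
   Context: Parking algorithm: for a sequence $P=(p_1,\dots,p_n)$ of positive integers, cars $1,\dots,n$ park in turn, car $c$ driving to space $p_c$ and taking the first empty space among $p_c,p_c+1,\dots$; let $q_c$ be its space. $PF_n$ is the set of such sequences with all $q_c\le n$ (parking functions of length $n$). A car $c$ is lucky if $q_c=p_c$; $\operatorname{lucky}(P)$ is the number of lucky cars. A car $c$ is critical if at the moment it parks all spaces $q_c+1,\dots,n$ are already occupied; $\operatorname{critic}(P)$ is the number of critical cars. *)

theory Defs
  imports Main
begin

primrec park_spaces :: "nat set \<Rightarrow> nat list \<Rightarrow> nat list" where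
  "park_spaces Occ [] = []"
| "park_spaces Occ (p # ps) =
     (let q = (LEAST s. p \<le> s \<and> s \<notin> Occ) in q # park_spaces (insert q Occ) ps)"

text \<open>spaces P ! i is the space q of car i+1 (cars are 0-indexed in lists).\<close>
definition spaces :: "nat list \<Rightarrow> nat list" where
  "spaces P = park_spaces {} P"

definition PF :: "nat \<Rightarrow> nat list set" where
  "PF n = {P. length P = n \<and> (\<forall>p\<in>set P. 1 \<le> p) \<and> (\<forall>q\<in>set (spaces P). q \<le> n)}"

definition lucky :: "nat list \<Rightarrow> nat" where
  "lucky P = card {i. i < length P \<and> spaces P ! i = P ! i}"

definition critic :: "nat list \<Rightarrow> nat" where
  "critic P = card {i. i < length P \<and>
      {spaces P ! i + 1 .. length P} \<subseteq> set (take i (spaces P))}"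

end

theory Submission
  imports Defs "HOL-Computational_Algebra.Polynomial"
begin


definition Ep :: "'a::comm_ring_1 \<Rightarrow> 'a \<Rightarrow> nat \<Rightarrow> 'a" where
  "Ep u x k = (\<Prod>i<k. x + of_nat (Suc i) + of_nat (k - i) * u)"

definition Hp :: "'a::comm_ring_1 \<Rightarrow> 'a \<Rightarrow> nat \<Rightarrow> 'a" where
  "Hp u y j = (if j = 0 then 1 else y * Ep u y (j - 1))"

definition Dl :: "'a::comm_ring_1 \<Rightarrow> 'a \<Rightarrow> nat \<Rightarrow> 'a" where
  "Dl u y m = Ep u y m - (\<Sum>k\<le>m. of_nat (m choose k) * Ep u 0 k * Hp u y (m - k))"

lemma PE1: "Ep u x (Suc m) = Ep u (x + u) m * (x + of_nat (Suc m) + u)"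
  unfolding Ep_def
  by (auto simp: Suc_diff_le algebra_simps intro!: prod.cong)

lemma PE2: "Ep u (x - (1 - u)) (Suc m) = (x + of_nat (Suc (Suc m)) * u) * Ep u (x + u) m"
  unfolding Ep_def prod.lessThan_Suc_shift
  by (auto simp: Suc_diff_le algebra_simps intro!: prod.cong)

lemma PH: "Hp u y (Suc j) - Hp u (y - (1 - u)) (Suc j) = of_nat (Suc j) * (1 - u) * Hp u (y + u) j"
proof (cases j)
  case 0
  then show ?thesis by (simp add: Hp_def Ep_def)
next
  case (Suc j')
  have "Hp u y (Suc j) - Hp u (y - (1 - u)) (Suc j) =
     Ep u (y+u) j' * (y * (y + of_nat (Suc j') + u) - (y - (1 - u)) * (y + of_nat (Suc (Suc j')) * u))"
    unfolding Hp_def Suc using PE1[of u y j'] PE2[of u y j'] by (simp add: algebra_simps)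
  also have "\<dots> = Ep u (y+u) j' * (of_nat (Suc (Suc j')) * (1 - u) * (y + u))"
    by (simp add: algebra_simps)
  also have "\<dots> = of_nat (Suc j) * (1 - u) * Hp u (y + u) j"
    unfolding Hp_def Suc by (simp add: algebra_simps)
  finally show ?thesis .
qed

lemma Hp0: "Hp u 0 j = (if j = 0 then 1 else 0)"
  by (simp add: Hp_def)

lemma Dl_at0: "Dl u 0 m = 0"
proof -
  have "(\<Sum>k\<le>m. of_nat (m choose k) * Ep u 0 k * Hp u 0 (m - k)) =
        (\<Sum>k\<in>{m}. of_nat (m choose k) * Ep u 0 k * Hp u 0 (m - k))"
    by (rule sum.mono_neutral_right) (auto simp: Hp0)
  then show ?thesis by (simp add: Dl_def Hp0)
qed

lemma PEd: "Ep u y (Suc m) - Ep u (y - (1 - u)) (Suc m) = of_nat (Suc m) * (1 - u) * Ep u (y + u) m"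
  using PE1[of u y m] PE2[of u y m] by (simp add: algebra_simps)

lemma Dl_pascal:
  "Dl u y (Suc m) - Dl u (y - (1 - u)) (Suc m) = of_nat (Suc m) * (1 - u) * Dl u (y + u) m"
proof -
  let ?a = "1 - u"
  have "(\<Sum>k\<le>Suc m. of_nat (Suc m choose k) * Ep u 0 k * Hp u y (Suc m - k)) -
        (\<Sum>k\<le>Suc m. of_nat (Suc m choose k) * Ep u 0 k * Hp u (y - ?a) (Suc m - k)) =
        (\<Sum>k\<le>Suc m. of_nat (Suc m choose k) * Ep u 0 k * (Hp u y (Suc m - k) - Hp u (y - ?a) (Suc m - k)))"
    by (simp add: sum_subtractf algebra_simps)
  also have "\<dots> = (\<Sum>k\<le>m. of_nat (Suc m choose k) * Ep u 0 k * (Hp u y (Suc m - k) - Hp u (y - ?a) (Suc m - k)))"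
    by (simp add: Hp_def)
  also have "\<dots> = (\<Sum>k\<le>m. of_nat (Suc m) * ?a * (of_nat (m choose k) * Ep u 0 k * Hp u (y + u) (m - k)))"
  proof (rule sum.cong)
    fix k assume "k \<in> {..m}"
    then have k: "k \<le> m" by simp
    have e: "Suc m - k = Suc (m - k)" using k by simp
    have b0: "(Suc m - k) * (Suc m choose k) = Suc m * (m choose k)"
      using binomial_absorb_comp[of "Suc m" k] by simp
    have b: "(Suc m choose k) * Suc (m - k) = Suc m * (m choose k)"
      using b0 e by (metis mult.commute)
    have b': "of_nat (Suc m choose k) * (of_nat (Suc (m - k)) :: 'a) = of_nat (Suc m) * of_nat (m choose k)"
      using arg_cong[OF b, of of_nat] by (simp only: of_nat_mult)
    show "of_nat (Suc m choose k) * Ep u 0 k * (Hp u y (Suc m - k) - Hp u (y - ?a) (Suc m - k)) =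
          of_nat (Suc m) * ?a * (of_nat (m choose k) * Ep u 0 k * Hp u (y + u) (m - k))"
      unfolding e PH
    proof -
      let ?C1 = "of_nat (Suc m choose k) :: 'a" and ?E = "Ep u 0 k" and ?H = "Hp u (y + u) (m - k)"
        and ?N = "of_nat (Suc (m - k)) :: 'a" and ?C0 = "of_nat (m choose k) :: 'a"
      have "?C1 * ?E * (?N * ?a * ?H) = (?C1 * ?N) * (?a * (?E * ?H))" by (simp only: ac_simps)
      also have "\<dots> = (of_nat (Suc m) * ?C0) * (?a * (?E * ?H))" by (simp only: b')
      also have "\<dots> = of_nat (Suc m) * ?a * (?C0 * ?E * ?H)" by (simp only: ac_simps)
      finally show "?C1 * ?E * (?N * ?a * ?H) = of_nat (Suc m) * ?a * (?C0 * ?E * ?H)" .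
    qed
  qed simp
  also have "\<dots> = of_nat (Suc m) * ?a * (\<Sum>k\<le>m. of_nat (m choose k) * Ep u 0 k * Hp u (y + u) (m - k))"
    by (simp add: sum_distrib_left)
  finally have S: "(\<Sum>k\<le>Suc m. of_nat (Suc m choose k) * Ep u 0 k * Hp u y (Suc m - k)) -
        (\<Sum>k\<le>Suc m. of_nat (Suc m choose k) * Ep u 0 k * Hp u (y - ?a) (Suc m - k)) =
        of_nat (Suc m) * ?a * (\<Sum>k\<le>m. of_nat (m choose k) * Ep u 0 k * Hp u (y + u) (m - k))" .
  show ?thesis
    unfolding Dl_def using S PEd[of u y m] by (simp add: algebra_simps)
qed

locale rhom =
  fixes h :: "'a::comm_ring_1 \<Rightarrow> 'b::comm_ring_1"
  assumes hadd: "h (a + b) = h a + h b" and hmult: "h (a * b) = h a * h b"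
    and h0: "h 0 = 0" and h1: "h 1 = 1"
begin

lemma hminus: "h (- a) = - h a"
proof -
  have "h a + h (- a) = 0" using hadd[of a "-a"] h0 by simp
  then show ?thesis by (metis add.commute eq_neg_iff_add_eq_0)
qed

lemma hdiff: "h (a - b) = h a - h b"
  using hadd[of a "-b"] hminus by simp

lemma hnat: "h (of_nat n) = of_nat n"
  by (induction n) (simp_all add: h0 h1 hadd)

lemma hsum: "h (sum f A) = sum (\<lambda>x. h (f x)) A"
  by (induction A rule: infinite_finite_induct) (simp_all add: h0 hadd)

lemma hprod: "h (prod f A) = prod (\<lambda>x. h (f x)) A"
  by (induction A rule: infinite_finite_induct) (simp_all add: h1 hmult)

lemma hEp: "h (Ep u x k) = Ep (h u) (h x) k"
  unfolding Ep_def hprod by (intro prod.cong refl) (simp only: hadd hmult hnat)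

lemma hHp: "h (Hp u x k) = Hp (h u) (h x) k"
  unfolding Hp_def by (simp add: hEp hmult h1)

lemma hDl: "h (Dl u x k) = Dl (h u) (h x) k"
  unfolding Dl_def by (simp add: hdiff hsum hEp hHp hmult hnat h0)

end

lemma map_poly_add_hom:
  assumes "\<And>a b. f (a + b) = f a + f b" "f 0 = 0"
  shows "map_poly f (p + q) = map_poly f p + map_poly f q"
  by (rule poly_eqI) (simp add: coeff_map_poly assms)

lemma sum_hom_aux:
  assumes "\<And>a b. f (a + b) = f a + f b" "f 0 = 0"
  shows "f (sum g A) = sum (\<lambda>x. f (g x)) A"
  by (induction A rule: infinite_finite_induct) (simp_all add: assms)

lemma map_poly_mult_hom:
  assumes "\<And>a b. f (a + b) = f a + f b" "\<And>a b. f (a * b) = f a * f b" "f 0 = 0"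
  shows "map_poly f (p * q) = map_poly f p * map_poly f q"
  by (rule poly_eqI) (simp add: coeff_map_poly assms coeff_mult sum_hom_aux[of f, OF assms(1,3)])

lemma rhom_eval:
  assumes "rhom f"
  shows "rhom (\<lambda>p. poly (map_poly f p) x)"
proof -
  interpret rhom f by fact
  show ?thesis
    by unfold_locales
      (simp_all add: map_poly_add_hom[of f, OF hadd h0] map_poly_mult_hom[of f, OF hadd hmult h0] h0 h1)
qed

lemma rhom_of_int: "rhom of_int"
  by unfold_locales simp_all

lemma rhom_poly: "rhom (\<lambda>p. poly p x)"
  by unfold_locales simp_all

definition u0 :: "int poly" where "u0 = [:0, 1:]"

lemma univ_R: "Dl u0 t m = 0"
proof (induction m arbitrary: t)
  case 0
  then show ?case by (simp add: Dl_def Ep_def Hp_def)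
next
  case (Suc m)
  note IHm = Suc.IH
  let ?U = "[:u0:] :: int poly poly"
  let ?Y = "[:0, 1:] :: int poly poly"
  let ?D = "Dl ?U ?Y (Suc m)"
  let ?a = "1 - u0"
  have ev: "poly ?D t = Dl u0 t (Suc m)" for t
    using rhom.hDl[OF rhom_poly[of t], of ?U ?Y "Suc m"] by simp
  have roots: "poly ?D (of_nat k * ?a) = 0" for k
  proof (induction k)
    case 0
    then show ?case by (simp add: ev Dl_at0)
  next
    case (Suc k)
    have "Dl u0 (of_nat (Suc k) * ?a) (Suc m) - Dl u0 (of_nat (Suc k) * ?a - ?a) (Suc m) =
          of_nat (Suc m) * ?a * Dl u0 (of_nat (Suc k) * ?a + u0) m"
      by (rule Dl_pascal)
    moreover have "of_nat (Suc k) * ?a - ?a = of_nat k * ?a" by (simp add: algebra_simps)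
    ultimately show ?case using Suc.IH IHm by (simp add: ev)
  qed
  have a0: "?a \<noteq> 0"
  proof
    assume "?a = 0"
    then have "poly ?a 0 = 0" by simp
    then show False by (simp add: u0_def)
  qed
  have inj: "inj (\<lambda>k::nat. of_nat k * ?a)"
    by (rule injI) (use a0 in simp)
  have "?D = 0"
  proof (rule ccontr)
    assume "?D \<noteq> 0"
    then have "finite {x. poly ?D x = 0}" by (rule poly_roots_finite)
    moreover have "range (\<lambda>k::nat. of_nat k * ?a) \<subseteq> {x. poly ?D x = 0}"
      using roots by auto
    ultimately have "finite (range (\<lambda>k::nat. of_nat k * ?a))" by (rule finite_subset[rotated])
    then show False using inj by (simp add: finite_image_iff)
  qed
  then show ?case using ev[of t] by simp
qed

lemma univ_S: "Dl [:u0:] [:0, 1:] m = (0 :: int poly poly)"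
proof -
  have "poly (Dl [:u0:] [:0, 1:] m) t = 0" for t
    using rhom.hDl[OF rhom_poly[of t], of "[:u0:]" "[:0,1:]" m] univ_R by simp
  then show ?thesis using poly_all_0_iff_0 by blast
qed

theorem Dl_zero:
  fixes u y :: "'a::comm_ring_1"
  shows "Dl u y m = 0"
proof -
  define f1 :: "int poly \<Rightarrow> 'a" where "f1 = (\<lambda>q. poly (map_poly of_int q) u)"
  have h1: "rhom f1" unfolding f1_def by (rule rhom_eval[OF rhom_of_int])
  define phi :: "int poly poly \<Rightarrow> 'a" where "phi = (\<lambda>p. poly (map_poly f1 p) y)"
  have h2: "rhom phi" unfolding phi_def by (rule rhom_eval[OF h1])
  interpret rhom phi by (rule h2)
  have pu: "phi [:u0:] = u" by (simp add: phi_def f1_def u0_def map_poly_pCons)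
  have py: "phi [:0, 1:] = y"
  proof -
    have "f1 0 = 0" "f1 1 = 1" by (simp_all add: f1_def)
    then show ?thesis by (simp add: phi_def map_poly_pCons)
  qed
  have "phi (Dl [:u0:] [:0, 1:] m) = 0" by (simp add: univ_S h0)
  then show ?thesis by (simp add: hDl pu py)
qed



definition nxt :: "nat set \<Rightarrow> nat \<Rightarrow> nat" where
  "nxt Oc p = (LEAST s. p \<le> s \<and> s \<notin> Oc)"

lemma ps_Cons [simp]: "park_spaces Oc (p # ps) = nxt Oc p # park_spaces (insert (nxt Oc p) Oc) ps"
  by (simp add: nxt_def Let_def)

declare park_spaces.simps(2) [simp del]

lemma ps_Nil: "park_spaces Oc [] = []" by simp

lemma nxt_ex: "finite Oc \<Longrightarrow> \<exists>s::nat. (p::nat) \<le> s \<and> s \<notin> Oc"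
proof -
  assume "finite Oc"
  then have "\<exists>k. \<forall>n\<in>Oc. n \<le> k" unfolding finite_nat_set_iff_bounded_le .
  then obtain k where "\<forall>n\<in>Oc. n \<le> k" by blast
  then show ?thesis by (intro exI[of _ "max p (Suc k)"]) auto
qed

lemma nxt_props:
  assumes "finite Oc"
  shows "p \<le> nxt Oc p" "nxt Oc p \<notin> Oc" "\<And>s. p \<le> s \<Longrightarrow> s < nxt Oc p \<Longrightarrow> s \<in> Oc"
proof -
  from nxt_ex[OF assms] obtain s where s: "p \<le> s \<and> s \<notin> Oc" by blast
  show "p \<le> nxt Oc p" "nxt Oc p \<notin> Oc" unfolding nxt_def using LeastI[of "\<lambda>s. p \<le> s \<and> s \<notin> Oc", OF s] by auto
  fix t assume "p \<le> t" "t < nxt Oc p"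
  then show "t \<in> Oc" unfolding nxt_def using not_less_Least by blast
qed

lemma nxt_eqI:
  assumes "p \<le> q" "q \<notin> Oc" "\<And>s. p \<le> s \<Longrightarrow> s < q \<Longrightarrow> s \<in> Oc"
  shows "nxt Oc p = q"
  unfolding nxt_def
proof (rule Least_equality)
  show "p \<le> q \<and> q \<notin> Oc" using assms by simp
next
  fix y assume y: "p \<le> y \<and> y \<notin> Oc"
  show "q \<le> y"
  proof (rule ccontr)
    assume "\<not> q \<le> y"
    then have "y < q" by simp
    with y assms(3) show False by blast
  qed
qed

lemma nxt_cong:
  assumes "\<And>s. p \<le> s \<Longrightarrow> s \<in> O1 \<longleftrightarrow> s \<in> O2"
  shows "nxt O1 p = nxt O2 p"
  unfolding nxt_def by (rule arg_cong[where f = Least]) (use assms in auto)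


lemma length_ps [simp]: "length (park_spaces Oc ps) = length ps"
  by (induction ps arbitrary: Oc) simp_all

primrec wt :: "nat \<Rightarrow> 'a::comm_ring_1 \<Rightarrow> 'a \<Rightarrow> nat set \<Rightarrow> nat list \<Rightarrow> 'a" where
  "wt n c u Oc [] = 1"
| "wt n c u Oc (p # ps) = (if nxt Oc p = p then u else 1) * (if {nxt Oc p + 1..n} \<subseteq> Oc then c else 1)
      * wt n c u (insert (nxt Oc p) Oc) ps"

definition valid :: "nat \<Rightarrow> nat set \<Rightarrow> nat list \<Rightarrow> bool" where
  "valid n Oc ps = (\<forall>q\<in>set (park_spaces Oc ps). q \<le> n)"

lemma valid_Nil [simp]: "valid n Oc []" by (simp add: valid_def)

lemma valid_Cons: "valid n Oc (p # ps) \<longleftrightarrow> nxt Oc p \<le> n \<and> valid n (insert (nxt Oc p) Oc) ps"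
  by (simp add: valid_def ps_Cons)

definition LL :: "nat set \<Rightarrow> nat \<Rightarrow> nat list set" where
  "LL S k = {xs. set xs \<subseteq> S \<and> length xs = k}"

lemma finite_LL: "finite S \<Longrightarrow> finite (LL S k)"
  unfolding LL_def by (rule finite_lists_length_eq)

definition W :: "nat \<Rightarrow> 'a::comm_ring_1 \<Rightarrow> 'a \<Rightarrow> 'a" where
  "W n c u = (\<Sum>P\<in>LL {1..n} n. if valid n {} P then wt n c u {} P else 0)"

lemma card_Suc_split:
  "card {i. i < Suc m \<and> Q i} = (if Q 0 then 1 else 0) + card {i. i < m \<and> Q (Suc i)}"
proof -
  have ci: "card (Suc ` {i. i < m \<and> Q (Suc i)}) = card {i. i < m \<and> Q (Suc i)}"
    by (rule card_image) simp
  show ?thesis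
  proof (cases "Q 0")
    case True
    then have e: "{i. i < Suc m \<and> Q i} = insert 0 (Suc ` {i. i < m \<and> Q (Suc i)})"
      by (auto simp: less_Suc_eq_0_disj image_iff)
    show ?thesis unfolding e using True ci by (subst card_insert_disjoint) auto
  next
    case False
    then have e: "{i. i < Suc m \<and> Q i} = Suc ` {i. i < m \<and> Q (Suc i)}"
      by (auto simp: less_Suc_eq_0_disj image_iff)
    show ?thesis unfolding e using False ci by simp
  qed
qed

lemma wt_card:
  "wt n c u Oc ps = c ^ card {i. i < length ps \<and> {park_spaces Oc ps ! i + 1..n} \<subseteq> Oc \<union> set (take i (park_spaces Oc ps))}
     * u ^ card {i. i < length ps \<and> park_spaces Oc ps ! i = ps ! i}"
proof (induction ps arbitrary: Oc)
  case Nil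
  then show ?case by simp
next
  case (Cons p ps)
  let ?q = "nxt Oc p"
  let ?qs = "park_spaces (insert ?q Oc) ps"
  have e1: "{i. i < length (p # ps) \<and> {park_spaces Oc (p # ps) ! i + 1..n} \<subseteq> Oc \<union> set (take i (park_spaces Oc (p # ps)))}
      = {i. i < Suc (length ps) \<and> {(?q # ?qs) ! i + 1..n} \<subseteq> Oc \<union> set (take i (?q # ?qs))}"
    by (simp add: ps_Cons)
  have e2: "{i. i < length (p # ps) \<and> park_spaces Oc (p # ps) ! i = (p # ps) ! i}
      = {i. i < Suc (length ps) \<and> (?q # ?qs) ! i = (p # ps) ! i}"
    by (simp add: ps_Cons)
  have s1: "{i. i < length ps \<and> {(?q # ?qs) ! Suc i + 1..n} \<subseteq> Oc \<union> set (take (Suc i) (?q # ?qs))}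
     = {i. i < length ps \<and> {?qs ! i + 1..n} \<subseteq> insert ?q Oc \<union> set (take i ?qs)}"
    by auto
  show ?case
    unfolding e1 e2 card_Suc_split s1
    by (simp add: Cons.IH power_add)
qed


lemma pref_le: "finite Oc \<Longrightarrow> p \<in> set ps \<Longrightarrow> \<exists>q\<in>set (park_spaces Oc ps). p \<le> q"
proof (induction ps arbitrary: Oc)
  case Nil then show ?case by simp
next
  case (Cons a ps)
  show ?case
  proof (cases "p = a")
    case True
    then show ?thesis using nxt_props(1)[OF Cons.prems(1), of a] by auto
  next
    case False
    then have "p \<in> set ps" using Cons.prems by simp
    then obtain q where "q \<in> set (park_spaces (insert (nxt Oc a) Oc) ps)" "p \<le> q"
      using Cons.IH[of "insert (nxt Oc a) Oc"] Cons.prems by auto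
    then show ?thesis by auto
  qed
qed

lemma ps_ge: "finite Oc \<Longrightarrow> set ps \<subseteq> {k..} \<Longrightarrow> set (park_spaces Oc ps) \<subseteq> {k..}"
proof (induction ps arbitrary: Oc)
  case Nil then show ?case by simp
next
  case (Cons a ps)
  have "k \<le> nxt Oc a" using nxt_props(1)[OF Cons.prems(1), of a] Cons.prems(2) by auto
  then show ?case using Cons.IH[of "insert (nxt Oc a) Oc"] Cons.prems by auto
qed

lemma ps_dist: "finite Oc \<Longrightarrow> distinct (park_spaces Oc ps) \<and> set (park_spaces Oc ps) \<inter> Oc = {}"
proof (induction ps arbitrary: Oc)
  case Nil then show ?case by simp
next
  case (Cons a ps)
  have "nxt Oc a \<notin> Oc" using nxt_props(2)[OF Cons.prems(1)] .
  then show ?case using Cons.IH[of "insert (nxt Oc a) Oc"] Cons.prems by auto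
qed

lemma ps_append: "park_spaces Oc (xs @ ys) = park_spaces Oc xs @ park_spaces (Oc \<union> set (park_spaces Oc xs)) ys"
  by (induction xs arbitrary: Oc) simp_all

lemma wt_append: "wt n c u Oc (xs @ ys) = wt n c u Oc xs * wt n c u (Oc \<union> set (park_spaces Oc xs)) ys"
  by (induction xs arbitrary: Oc) (simp_all add: mult.assoc)

lemma valid_append: "valid n Oc (xs @ ys) \<longleftrightarrow> valid n Oc xs \<and> valid n (Oc \<union> set (park_spaces Oc xs)) ys"
  by (auto simp: valid_def ps_append)

lemma hole_notin: "finite Oc \<Longrightarrow> r \<notin> Oc \<Longrightarrow> r \<notin> set (park_spaces Oc ps) \<Longrightarrow> r \<notin> set ps"
proof (induction ps arbitrary: Oc)
  case Nil then show ?case by simp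
next
  case (Cons a ps)
  have "a \<noteq> r"
  proof
    assume "a = r"
    then have "nxt Oc a = r" using Cons.prems(2) by (intro nxt_eqI) auto
    then show False using Cons.prems(3) by simp
  qed
  then show ?case using Cons.IH[of "insert (nxt Oc a) Oc"] Cons.prems by auto
qed

lemma PF_eq: "PF n = {P \<in> LL {1..n} n. valid n {} P}"
proof (rule set_eqI)
  fix P
  show "P \<in> PF n \<longleftrightarrow> P \<in> {P \<in> LL {1..n} n. valid n {} P}"
  proof
    assume P: "P \<in> PF n"
    then have v: "valid n {} P" by (simp add: PF_def valid_def spaces_def)
    have "set P \<subseteq> {1..n}"
    proof
      fix p assume "p \<in> set P"
      then obtain q where "q \<in> set (park_spaces {} P)" "p \<le> q" using pref_le[of "{}" p P] by auto
      then show "p \<in> {1..n}" using P \<open>p \<in> set P\<close> by (auto simp: PF_def spaces_def)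
    qed
    then show "P \<in> {P \<in> LL {1..n} n. valid n {} P}" using v P by (simp add: LL_def PF_def)
  next
    assume "P \<in> {P \<in> LL {1..n} n. valid n {} P}"
    then show "P \<in> PF n" by (auto simp: LL_def PF_def valid_def spaces_def)
  qed
qed

theorem lhs_W:
  "(\<Sum>P\<in>PF n. c ^ critic P * u ^ lucky P) = W n c (u :: 'a::comm_ring_1)"
proof -
  have "(\<Sum>P\<in>PF n. c ^ critic P * u ^ lucky P) = (\<Sum>P\<in>{P \<in> LL {1..n} n. valid n {} P}. wt n c u {} P)"
    unfolding PF_eq
  proof (rule sum.cong[OF refl])
    fix P assume "P \<in> {P \<in> LL {1..n} n. valid n {} P}"
    then have l: "length P = n" by (simp add: LL_def)
    show "c ^ critic P * u ^ lucky P = wt n c u {} P"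
      unfolding wt_card critic_def lucky_def spaces_def l by simp
  qed
  also have "\<dots> = W n c u"
    unfolding W_def by (rule sum.inter_filter) (simp add: finite_LL)
  finally show ?thesis .
qed

lemma LL_0: "LL S 0 = {[]}" by (auto simp: LL_def)

lemma sum_LL_Suc:
  assumes "finite S"
  shows "(\<Sum>xs\<in>LL S (Suc k). f xs) = (\<Sum>x\<in>S. \<Sum>xs\<in>LL S k. f (x # xs))"
proof -
  have "(\<Sum>xs\<in>LL S (Suc k). f xs) = (\<Sum>xs\<in>(\<lambda>(xs, n). n # xs) ` (LL S k \<times> S). f xs)"
    unfolding LL_def lists_length_Suc_eq ..
  also have "\<dots> = (\<Sum>p\<in>LL S k \<times> S. f (snd p # fst p))"
    by (subst sum.reindex) (auto simp: inj_split_Cons intro!: sum.cong)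
  also have "\<dots> = (\<Sum>xs\<in>LL S k. \<Sum>x\<in>S. f (x # xs))"
    using sum.cartesian_product[of "\<lambda>xs x. f (x # xs)" S "LL S k"] by (simp add: case_prod_beta)
  also have "\<dots> = (\<Sum>x\<in>S. \<Sum>xs\<in>LL S k. f (x # xs))"
    by (rule sum.swap)
  finally show ?thesis .
qed

lemma pascal_sum:
  fixes T :: "nat \<Rightarrow> 'a::comm_ring_1"
  shows "(\<Sum>k\<le>Suc N. of_nat (Suc N choose k) * T k) =
         (\<Sum>k\<le>N. of_nat (N choose k) * T k) + (\<Sum>k\<le>N. of_nat (N choose k) * T (Suc k))"
proof -
  have a: "(\<Sum>k\<le>Suc N. of_nat (Suc N choose k) * T k) =
           T 0 + (\<Sum>k\<le>N. of_nat (N choose k) * T (Suc k)) + (\<Sum>k\<le>N. of_nat (N choose Suc k) * T (Suc k))"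
    by (subst sum.atMost_Suc_shift) (simp add: sum.distrib algebra_simps)
  have b: "(\<Sum>k\<le>N. of_nat (N choose k) * T k) = T 0 + (\<Sum>k<N. of_nat (N choose Suc k) * T (Suc k))"
    by (subst sum.atMost_shift) simp
  have c: "(\<Sum>k\<le>N. of_nat (N choose Suc k) * T (Suc k)) = (\<Sum>k<N. of_nat (N choose Suc k) * T (Suc k))"
    by (simp add: lessThan_Suc_atMost[symmetric] binomial_eq_0)
  show ?thesis using a b c by (simp add: algebra_simps)
qed

lemma sum_mult_lr: "(\<Sum>x\<in>A. a * h x * b) = a * (\<Sum>x\<in>A. h x) * (b::'a::comm_ring_1)"
  by (simp add: sum_distrib_left sum_distrib_right mult.assoc)

lemma sum_mult_lr': "(\<Sum>x\<in>A. a * b * h x) = a * b * (\<Sum>x\<in>A. h x::'a::comm_ring_1)"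
  by (simp add: sum_distrib_left)

lemma shuffle:
  fixes f g :: "nat list \<Rightarrow> 'a::comm_ring_1"
  assumes fA: "finite A" and fB: "finite B" and AB: "A \<inter> B = {}"
  shows "(\<Sum>xs\<in>LL (A \<union> B) N. f (filter (\<lambda>x. x \<in> A) xs) * g (filter (\<lambda>x. x \<in> B) xs)) =
         (\<Sum>k\<le>N. of_nat (N choose k) * (\<Sum>ys\<in>LL A k. f ys) * (\<Sum>zs\<in>LL B (N - k). g zs))"
proof (induction N arbitrary: f g)
  case 0
  then show ?case by (simp add: LL_0)
next
  case (Suc N)
  let ?SA = "\<lambda>f k. (\<Sum>ys\<in>LL A k. f ys)" and ?SB = "\<lambda>g k. (\<Sum>zs\<in>LL B k. g zs)"
  let ?F = "\<lambda>xs. f (filter (\<lambda>x. x \<in> A) xs) * g (filter (\<lambda>x. x \<in> B) xs)"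
  have "(\<Sum>xs\<in>LL (A \<union> B) (Suc N). ?F xs) = (\<Sum>x\<in>A \<union> B. \<Sum>xs\<in>LL (A \<union> B) N. ?F (x # xs))"
    by (rule sum_LL_Suc) (use fA fB in simp)
  also have "\<dots> = (\<Sum>x\<in>A. \<Sum>xs\<in>LL (A \<union> B) N. ?F (x # xs)) + (\<Sum>x\<in>B. \<Sum>xs\<in>LL (A \<union> B) N. ?F (x # xs))"
    by (rule sum.union_disjoint) (use fA fB AB in auto)
  also have "(\<Sum>x\<in>A. \<Sum>xs\<in>LL (A \<union> B) N. ?F (x # xs)) =
      (\<Sum>x\<in>A. \<Sum>xs\<in>LL (A \<union> B) N. f (x # filter (\<lambda>x. x \<in> A) xs) * g (filter (\<lambda>x. x \<in> B) xs))"
    by (rule sum.cong[OF refl], rule sum.cong[OF refl]) (use AB in auto)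
  also have "\<dots> = (\<Sum>x\<in>A. \<Sum>k\<le>N. of_nat (N choose k) * ?SA (\<lambda>ys. f (x # ys)) k * ?SB g (N - k))"
    by (rule sum.cong[OF refl]) (rule Suc.IH)
  also have "\<dots> = (\<Sum>k\<le>N. of_nat (N choose k) * ?SA f (Suc k) * ?SB g (N - k))"
    by (subst sum.swap, rule sum.cong[OF refl]) (simp only: sum_mult_lr sum_LL_Suc[OF fA, symmetric])
  also have "(\<Sum>x\<in>B. \<Sum>xs\<in>LL (A \<union> B) N. ?F (x # xs)) =
      (\<Sum>x\<in>B. \<Sum>xs\<in>LL (A \<union> B) N. f (filter (\<lambda>x. x \<in> A) xs) * g (x # filter (\<lambda>x. x \<in> B) xs))"
    by (rule sum.cong[OF refl], rule sum.cong[OF refl]) (use AB in auto)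
  also have "\<dots> = (\<Sum>x\<in>B. \<Sum>k\<le>N. of_nat (N choose k) * ?SA f k * ?SB (\<lambda>zs. g (x # zs)) (N - k))"
    by (rule sum.cong[OF refl]) (rule Suc.IH)
  also have "\<dots> = (\<Sum>k\<le>N. of_nat (N choose k) * ?SA f k * ?SB g (Suc (N - k)))"
    by (subst sum.swap, rule sum.cong[OF refl]) (simp only: sum_mult_lr' sum_LL_Suc[OF fB, symmetric] Suc_diff_le atMost_iff)
  also have "(\<Sum>k\<le>N. of_nat (N choose k) * ?SA f k * ?SB g (Suc (N - k))) =
      (\<Sum>k\<le>N. of_nat (N choose k) * (?SA f k * ?SB g (Suc N - k)))"
    by (rule sum.cong[OF refl]) (simp add: Suc_diff_le mult.assoc)
  also have "(\<Sum>k\<le>N. of_nat (N choose k) * ?SA f (Suc k) * ?SB g (N - k)) =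
      (\<Sum>k\<le>N. of_nat (N choose k) * (?SA f (Suc k) * ?SB g (Suc N - Suc k)))"
    by (simp add: mult.assoc)
  finally have L: "(\<Sum>xs\<in>LL (A \<union> B) (Suc N). ?F xs) =
      (\<Sum>k\<le>N. of_nat (N choose k) * (?SA f (Suc k) * ?SB g (Suc N - Suc k))) +
      (\<Sum>k\<le>N. of_nat (N choose k) * (?SA f k * ?SB g (Suc N - k)))" .
  show ?case
    unfolding L using pascal_sum[of N "\<lambda>k. ?SA f k * ?SB g (Suc N - k)"]
    by (simp add: mult.assoc algebra_simps)
qed

lemma nxt_shift:
  assumes "finite Oc" "1 \<le> p"
  shows "nxt ({..r} \<union> (\<lambda>x. x + r) ` Oc) (p + r) = nxt Oc p + r"
proof (rule nxt_eqI)
  show "p + r \<le> nxt Oc p + r" using nxt_props(1)[OF assms(1)] by simp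
  have "nxt Oc p \<notin> Oc" using nxt_props(2)[OF assms(1)] .
  then show "nxt Oc p + r \<notin> {..r} \<union> (\<lambda>x. x + r) ` Oc"
    using nxt_props(1)[OF assms(1), of p] assms(2) by auto
next
  fix s assume s: "p + r \<le> s" "s < nxt Oc p + r"
  then have "s - r \<in> Oc" using nxt_props(3)[OF assms(1), of p "s - r"] by simp
  then have "(s - r) + r \<in> (\<lambda>x. x + r) ` Oc" by blast
  then show "s \<in> {..r} \<union> (\<lambda>x. x + r) ` Oc" using s by simp
qed

lemma crit_shift:
  assumes "(r::nat) \<le> n"
  shows "{q + r + 1..n} \<subseteq> {..r} \<union> (\<lambda>x. x + r) ` Oc \<longleftrightarrow> {q + 1..n - r} \<subseteq> Oc"
proof
  assume h: "{q + r + 1..n} \<subseteq> {..r} \<union> (\<lambda>x. x + r) ` Oc"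
  show "{q + 1..n - r} \<subseteq> Oc"
  proof
    fix x assume x: "x \<in> {q + 1..n - r}"
    then have "x + r \<in> {q + r + 1..n}" using assms by (simp; linarith)
    then have "x + r \<in> {..r} \<union> (\<lambda>x. x + r) ` Oc" using h by blast
    then show "x \<in> Oc" using x by auto
  qed
next
  assume h: "{q + 1..n - r} \<subseteq> Oc"
  show "{q + r + 1..n} \<subseteq> {..r} \<union> (\<lambda>x. x + r) ` Oc"
  proof
    fix s assume s: "s \<in> {q + r + 1..n}"
    then have "s - r \<in> {q + 1..n - r}" using assms by auto
    then have "s - r \<in> Oc" using h by blast
    then have "(s - r) + r \<in> (\<lambda>x. x + r) ` Oc" by blast
    then show "s \<in> {..r} \<union> (\<lambda>x. x + r) ` Oc" using s by simp
  qed
qed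

lemma shift_main:
  assumes "finite Oc" "set ys \<subseteq> {1..}" "r \<le> n"
  shows "(valid n ({..r} \<union> (\<lambda>x. x + r) ` Oc) (map (\<lambda>x. x + r) ys) \<longleftrightarrow> valid (n - r) Oc ys) \<and>
         wt n c u ({..r} \<union> (\<lambda>x. x + r) ` Oc) (map (\<lambda>x. x + r) ys) = wt (n - r) c u Oc ys"
  using assms(1,2)
proof (induction ys arbitrary: Oc)
  case Nil
  then show ?case by simp
next
  case (Cons p ys)
  let ?q = "nxt Oc p"
  have p1: "1 \<le> p" using Cons.prems(2) by simp
  have nq: "nxt ({..r} \<union> (\<lambda>x. x + r) ` Oc) (p + r) = ?q + r" by (rule nxt_shift[OF Cons.prems(1) p1])
  have ins: "insert (?q + r) ({..r} \<union> (\<lambda>x. x + r) ` Oc) = {..r} \<union> (\<lambda>x. x + r) ` (insert ?q Oc)" by auto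
  have IH: "(valid n ({..r} \<union> (\<lambda>x. x + r) ` (insert ?q Oc)) (map (\<lambda>x. x + r) ys) \<longleftrightarrow> valid (n - r) (insert ?q Oc) ys) \<and>
         wt n c u ({..r} \<union> (\<lambda>x. x + r) ` (insert ?q Oc)) (map (\<lambda>x. x + r) ys) = wt (n - r) c u (insert ?q Oc) ys"
    using Cons.IH[of "insert ?q Oc"] Cons.prems by simp
  have cr: "{?q + r + 1..n} \<subseteq> {..r} \<union> (\<lambda>x. x + r) ` Oc \<longleftrightarrow> {?q + 1..n - r} \<subseteq> Oc"
    by (rule crit_shift[OF assms(3)])
  have le: "(?q + r \<le> n) = (?q \<le> n - r)" using assms(3) by arith
  have eqp: "(?q + r = p + r) = (?q = p)" by simp
  show ?case
  proof
    show "valid n ({..r} \<union> (\<lambda>x. x + r) ` Oc) (map (\<lambda>x. x + r) (p # ys)) = valid (n - r) Oc (p # ys)"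
      unfolding list.map valid_Cons nq ins using IH le by (simp only:)
    show "wt n c u ({..r} \<union> (\<lambda>x. x + r) ` Oc) (map (\<lambda>x. x + r) (p # ys)) = wt (n - r) c u Oc (p # ys)"
      unfolding list.map wt.simps nq ins using IH eqp cr by (simp only:)
  qed
qed

lemma inj_map_add: "inj_on (map (\<lambda>x::nat. x + r)) X"
  by (rule inj_onI) (simp add: inj_map_eq_map inj_on_def)

lemma LL_shift: "LL {r<..n} k = map (\<lambda>x. x + r) ` LL {1..n - r} k"
proof (rule set_eqI)
  fix zs
  show "zs \<in> LL {r<..n} k \<longleftrightarrow> zs \<in> map (\<lambda>x. x + r) ` LL {1..n - r} k"
  proof
    assume z: "zs \<in> LL {r<..n} k"
    have "map (\<lambda>x. x + r) (map (\<lambda>x. x - r) zs) = zs"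
      unfolding map_map by (rule map_idI) (use z in \<open>auto simp: LL_def subset_iff\<close>)
    then have "zs = map (\<lambda>x. x + r) (map (\<lambda>x. x - r) zs)" by simp
    moreover have "map (\<lambda>x. x - r) zs \<in> LL {1..n - r} k" using z by (force simp: LL_def subset_iff)
    ultimately show "zs \<in> map (\<lambda>x. x + r) ` LL {1..n - r} k" by blast
  next
    assume "zs \<in> map (\<lambda>x. x + r) ` LL {1..n - r} k"
    then show "zs \<in> LL {r<..n} k" by (force simp: LL_def subset_iff)
  qed
qed

lemma SB_shift:
  assumes "r \<le> n"
  shows "(\<Sum>zs\<in>LL {r<..n} (n - r). if valid n {..r} zs then wt n c u {..r} zs else 0) = W (n - r) c u"
proof -
  have "(\<Sum>zs\<in>LL {r<..n} (n - r). if valid n {..r} zs then wt n c u {..r} zs else 0) =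
        (\<Sum>ys\<in>LL {1..n - r} (n - r). if valid n {..r} (map (\<lambda>x. x + r) ys) then wt n c u {..r} (map (\<lambda>x. x + r) ys) else 0)"
    unfolding LL_shift by (subst sum.reindex[OF inj_map_add]) simp
  also have "\<dots> = W (n - r) c u"
    unfolding W_def
  proof (rule sum.cong[OF refl])
    fix ys assume "ys \<in> LL {1..n - r} (n - r)"
    then have "set ys \<subseteq> {1..}" by (auto simp: LL_def)
    then show "(if valid n {..r} (map (\<lambda>x. x + r) ys) then wt n c u {..r} (map (\<lambda>x. x + r) ys) else 0) =
          (if valid (n - r) {} ys then wt (n - r) c u {} ys else 0)"
      using shift_main[of "{}" ys r n c u] assms by simp
  qed
  finally show ?thesis .
qed

lemma zone:
  assumes r1: "1 \<le> r" and rn: "r \<le> n"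
  shows "finite OA \<Longrightarrow> finite OB \<Longrightarrow> OA \<subseteq> {..<r} \<Longrightarrow> OB \<subseteq> {r<..} \<Longrightarrow> set ps \<subseteq> {1..<r} \<union> {r<..n} \<Longrightarrow>
    ((valid n (OA \<union> OB) ps \<and> r \<notin> set (park_spaces (OA \<union> OB) ps)) \<longleftrightarrow>
      (valid (r - 1) OA (filter (\<lambda>x. x < r) ps) \<and> valid n ({..r} \<union> OB) (filter (\<lambda>x. r < x) ps))) \<and>
    ((valid n (OA \<union> OB) ps \<and> r \<notin> set (park_spaces (OA \<union> OB) ps)) \<longrightarrow>
      wt n c u (OA \<union> OB) ps = wt (r - 1) 1 u OA (filter (\<lambda>x. x < r) ps) * wt n c u ({..r} \<union> OB) (filter (\<lambda>x. r < x) ps))"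
proof (induction ps arbitrary: OA OB)
  case Nil
  then show ?case by simp
next
  case (Cons p ps)
  note fA = Cons.prems(1) and fB = Cons.prems(2) and sA = Cons.prems(3) and sB = Cons.prems(4)
  have sps: "set ps \<subseteq> {1..<r} \<union> {r<..n}" using Cons.prems(5) by simp
  have pin: "p \<in> {1..<r} \<union> {r<..n}" using Cons.prems(5) by simp
  show ?case
  proof (cases "p < r")
    case True
    let ?q = "nxt OA p"
    have q1: "p \<le> ?q" and q2: "?q \<notin> OA" and q3: "\<And>s. p \<le> s \<Longrightarrow> s < ?q \<Longrightarrow> s \<in> OA"
      using nxt_props[OF fA] by auto
    have fl1: "filter (\<lambda>x. x < r) (p # ps) = p # filter (\<lambda>x. x < r) ps" using True by simp
    have fl2: "filter (\<lambda>x. r < x) (p # ps) = filter (\<lambda>x. r < x) ps" using True by simp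
    show ?thesis
    proof (cases "?q < r")
      case True
      have qC: "nxt (OA \<union> OB) p = ?q"
        by (rule nxt_eqI) (use q1 q2 q3 True sB in auto)
      have ins: "insert ?q (OA \<union> OB) = insert ?q OA \<union> OB" by simp
      have IH: "((valid n (insert ?q OA \<union> OB) ps \<and> r \<notin> set (park_spaces (insert ?q OA \<union> OB) ps)) \<longleftrightarrow>
          (valid (r - 1) (insert ?q OA) (filter (\<lambda>x. x < r) ps) \<and> valid n ({..r} \<union> OB) (filter (\<lambda>x. r < x) ps))) \<and>
        ((valid n (insert ?q OA \<union> OB) ps \<and> r \<notin> set (park_spaces (insert ?q OA \<union> OB) ps)) \<longrightarrow>
          wt n c u (insert ?q OA \<union> OB) ps = wt (r - 1) 1 u (insert ?q OA) (filter (\<lambda>x. x < r) ps) * wt n c u ({..r} \<union> OB) (filter (\<lambda>x. r < x) ps))"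
        using Cons.IH[of "insert ?q OA" OB] fA fB sA sB sps True by auto
      have c1: "?q \<le> n" "?q \<noteq> r" "?q \<le> r - 1" using True rn by auto
      have c2: "\<not> {?q + 1..n} \<subseteq> OA \<union> OB"
      proof
        assume "{?q + 1..n} \<subseteq> OA \<union> OB"
        moreover have "r \<in> {?q + 1..n}" using True rn by auto
        ultimately show False using sA sB by auto
      qed
      show ?thesis
        unfolding fl1 fl2 ps_Cons valid_Cons wt.simps qC ins
        using IH c1 c2 by (simp add: mult.assoc)
    next
      case False
      have qr: "?q = r"
      proof (rule ccontr)
        assume "?q \<noteq> r"
        then have "r < ?q" using False by simp
        then have "r \<in> OA" using q3[of r] \<open>p < r\<close> by simp
        then show False using sA by auto
      qed
      have qC: "nxt (OA \<union> OB) p = r"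
        by (rule nxt_eqI) (use q3 qr \<open>p < r\<close> sA sB in auto)
      have "\<not> ?q \<le> r - 1" using qr r1 by simp
      then show ?thesis
        unfolding fl1 fl2 ps_Cons valid_Cons qC by simp
    qed
  next
    case False
    then have rp: "r < p" using pin by auto
    let ?q = "nxt ({..r} \<union> OB) p"
    have fB': "finite ({..r} \<union> OB)" using fB by simp
    have q1: "p \<le> ?q" using nxt_props(1)[OF fB'] .
    have qC: "nxt (OA \<union> OB) p = ?q"
      by (rule nxt_cong) (use rp sA in auto)
    have fl1: "filter (\<lambda>x. x < r) (p # ps) = filter (\<lambda>x. x < r) ps" using rp by simp
    have fl2: "filter (\<lambda>x. r < x) (p # ps) = p # filter (\<lambda>x. r < x) ps" using rp by simp
    have ins1: "insert ?q (OA \<union> OB) = OA \<union> insert ?q OB" by simp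
    have ins2: "insert ?q ({..r} \<union> OB) = {..r} \<union> insert ?q OB" by simp
    have IH: "((valid n (OA \<union> insert ?q OB) ps \<and> r \<notin> set (park_spaces (OA \<union> insert ?q OB) ps)) \<longleftrightarrow>
          (valid (r - 1) OA (filter (\<lambda>x. x < r) ps) \<and> valid n ({..r} \<union> insert ?q OB) (filter (\<lambda>x. r < x) ps))) \<and>
        ((valid n (OA \<union> insert ?q OB) ps \<and> r \<notin> set (park_spaces (OA \<union> insert ?q OB) ps)) \<longrightarrow>
          wt n c u (OA \<union> insert ?q OB) ps = wt (r - 1) 1 u OA (filter (\<lambda>x. x < r) ps) * wt n c u ({..r} \<union> insert ?q OB) (filter (\<lambda>x. r < x) ps))"
      using Cons.IH[of OA "insert ?q OB"] fA fB sA sB sps q1 rp by auto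
    have c1: "?q \<noteq> r" using q1 rp by simp
    have c2: "{?q + 1..n} \<subseteq> OA \<union> OB \<longleftrightarrow> {?q + 1..n} \<subseteq> {..r} \<union> OB"
      using q1 rp sA by auto
    show ?thesis
      unfolding fl1 fl2 ps_Cons valid_Cons wt.simps qC ins1 ins2
      using IH c1 c2 by (simp add: ac_simps)
  qed
qed

lemma lenA:
  assumes "ys \<in> LL {1..<r} k" "valid (r - 1) {} ys"
  shows "k \<le> r - 1"
proof -
  have s0: "set ys \<subseteq> {1..}" using assms(1) by (auto simp: LL_def)
  have s1: "set (park_spaces {} ys) \<subseteq> {1..}" by (rule ps_ge) (use s0 in simp_all)
  have "set (park_spaces {} ys) \<subseteq> {1..r - 1}" using s1 assms(2) by (auto simp: valid_def)
  then have "card (set (park_spaces {} ys)) \<le> card {1..r - 1}" by (rule card_mono[rotated]) simp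
  moreover have "card (set (park_spaces {} ys)) = k"
    using ps_dist[of "{}" ys] assms(1) by (simp add: distinct_card LL_def)
  ultimately show ?thesis by simp
qed

lemma lenB:
  assumes "zs \<in> LL {r<..n} k" "valid n {..r} zs"
  shows "k \<le> n - r"
proof -
  have d: "distinct (park_spaces {..r} zs) \<and> set (park_spaces {..r} zs) \<inter> {..r} = {}"
    by (rule ps_dist) simp
  have "set (park_spaces {..r} zs) \<subseteq> {r<..n}" using d assms(2) by (auto simp: valid_def)
  then have "card (set (park_spaces {..r} zs)) \<le> card {r<..n}" by (rule card_mono[rotated]) simp
  moreover have "card (set (park_spaces {..r} zs)) = k"
    using d assms(1) by (simp add: distinct_card LL_def)
  ultimately show ?thesis by simp
qed

lemma G_eq:
  assumes r1: "1 \<le> r" and rn: "r \<le> n"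
  shows "(\<Sum>xs\<in>LL {1..n} (n - 1). if valid n {} xs \<and> r \<notin> set (park_spaces {} xs) then wt n c u {} xs else 0) =
         of_nat ((n - 1) choose (r - 1)) * W (r - 1) 1 u * W (n - r) c (u::'a::comm_ring_1)"
proof -
  define A where "A = {1..<r}"
  define B where "B = {r<..n}"
  define f where "f = (\<lambda>ys. if valid (r - 1) {} ys then wt (r - 1) 1 u {} ys else (0::'a))"
  define g where "g = (\<lambda>zs. if valid n {..r} zs then wt n c u {..r} zs else (0::'a))"
  have fA: "finite A" and fB: "finite B" and AB: "A \<inter> B = {}" by (auto simp: A_def B_def)
  have AB1: "A \<union> B = {1..n} - {r}" using rn by (auto simp: A_def B_def)
  have "(\<Sum>xs\<in>LL {1..n} (n - 1). if valid n {} xs \<and> r \<notin> set (park_spaces {} xs) then wt n c u {} xs else 0) =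
        (\<Sum>xs\<in>LL (A \<union> B) (n - 1). if valid n {} xs \<and> r \<notin> set (park_spaces {} xs) then wt n c u {} xs else 0)"
  proof (rule sum.mono_neutral_right)
    show "finite (LL {1..n} (n - 1))" by (simp add: finite_LL)
    show "LL (A \<union> B) (n - 1) \<subseteq> LL {1..n} (n - 1)" unfolding AB1 by (auto simp: LL_def)
    show "\<forall>xs\<in>LL {1..n} (n - 1) - LL (A \<union> B) (n - 1).
      (if valid n {} xs \<and> r \<notin> set (park_spaces {} xs) then wt n c u {} xs else 0) = 0"
    proof
      fix xs assume xs: "xs \<in> LL {1..n} (n - 1) - LL (A \<union> B) (n - 1)"
      show "(if valid n {} xs \<and> r \<notin> set (park_spaces {} xs) then wt n c u {} xs else 0) = 0"
      proof (cases "r \<notin> set (park_spaces {} xs)")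
        case True
        then have "r \<notin> set xs" using hole_notin[of "{}" r xs] by simp
        then have "xs \<in> LL (A \<union> B) (n - 1)" using xs unfolding AB1 by (auto simp: LL_def)
        then show ?thesis using xs by simp
      qed simp
    qed
  qed
  also have "\<dots> = (\<Sum>xs\<in>LL (A \<union> B) (n - 1). f (filter (\<lambda>x. x \<in> A) xs) * g (filter (\<lambda>x. x \<in> B) xs))"
  proof (rule sum.cong[OF refl])
    fix xs assume xs: "xs \<in> LL (A \<union> B) (n - 1)"
    have s: "set xs \<subseteq> {1..<r} \<union> {r<..n}" using xs by (auto simp: LL_def A_def B_def)
    have e1: "filter (\<lambda>x. x \<in> A) xs = filter (\<lambda>x. x < r) xs"
      by (rule filter_cong[OF refl]) (use s in \<open>auto simp: A_def\<close>)
    have e2: "filter (\<lambda>x. x \<in> B) xs = filter (\<lambda>x. r < x) xs"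
      by (rule filter_cong[OF refl]) (use s in \<open>auto simp: B_def\<close>)
    have Z: "((valid n ({} \<union> {}) xs \<and> r \<notin> set (park_spaces ({} \<union> {}) xs)) \<longleftrightarrow>
      (valid (r - 1) {} (filter (\<lambda>x. x < r) xs) \<and> valid n ({..r} \<union> {}) (filter (\<lambda>x. r < x) xs))) \<and>
    ((valid n ({} \<union> {}) xs \<and> r \<notin> set (park_spaces ({} \<union> {}) xs)) \<longrightarrow>
      wt n c u ({} \<union> {}) xs = wt (r - 1) 1 u {} (filter (\<lambda>x. x < r) xs) * wt n c u ({..r} \<union> {}) (filter (\<lambda>x. r < x) xs))"
      by (rule zone[OF r1 rn]) (use s in auto)
    show "(if valid n {} xs \<and> r \<notin> set (park_spaces {} xs) then wt n c u {} xs else 0) =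
          f (filter (\<lambda>x. x \<in> A) xs) * g (filter (\<lambda>x. x \<in> B) xs)"
      unfolding e1 e2 f_def g_def using Z by auto
  qed
  also have "\<dots> = (\<Sum>k\<le>n - 1. of_nat ((n - 1) choose k) * (\<Sum>ys\<in>LL A k. f ys) * (\<Sum>zs\<in>LL B (n - 1 - k). g zs))"
    by (rule shuffle[OF fA fB AB])
  also have "\<dots> = (\<Sum>k\<in>{r - 1}. of_nat ((n - 1) choose k) * (\<Sum>ys\<in>LL A k. f ys) * (\<Sum>zs\<in>LL B (n - 1 - k). g zs))"
  proof (rule sum.mono_neutral_right)
    show "{r - 1} \<subseteq> {..n - 1}" using rn by simp
    show "\<forall>k\<in>{..n - 1} - {r - 1}. of_nat ((n - 1) choose k) * (\<Sum>ys\<in>LL A k. f ys) * (\<Sum>zs\<in>LL B (n - 1 - k). g zs) = 0"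
    proof
      fix k assume k: "k \<in> {..n - 1} - {r - 1}"
      show "of_nat ((n - 1) choose k) * (\<Sum>ys\<in>LL A k. f ys) * (\<Sum>zs\<in>LL B (n - 1 - k). g zs) = 0"
      proof (cases "k < r - 1")
        case True
        have "(\<Sum>zs\<in>LL B (n - 1 - k). g zs) = 0"
        proof (rule sum.neutral, rule ballI)
          fix zs assume zs: "zs \<in> LL B (n - 1 - k)"
          have "\<not> valid n {..r} zs"
          proof
            assume "valid n {..r} zs"
            then have "n - 1 - k \<le> n - r" using lenB[of zs r n "n - 1 - k"] zs by (simp add: B_def)
            then show False using True rn r1 by arith
          qed
          then show "g zs = 0" by (simp add: g_def)
        qed
        then show ?thesis by simp
      next
        case False
        then have kr: "r - 1 < k" using k by auto
        have "(\<Sum>ys\<in>LL A k. f ys) = 0"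
        proof (rule sum.neutral, rule ballI)
          fix ys assume ys: "ys \<in> LL A k"
          have "\<not> valid (r - 1) {} ys"
          proof
            assume "valid (r - 1) {} ys"
            then have "k \<le> r - 1" using lenA[of ys r k] ys by (simp add: A_def)
            then show False using kr by simp
          qed
          then show "f ys = 0" by (simp add: f_def)
        qed
        then show ?thesis by simp
      qed
    qed
  qed simp
  also have "\<dots> = of_nat ((n - 1) choose (r - 1)) * (\<Sum>ys\<in>LL A (r - 1). f ys) * (\<Sum>zs\<in>LL B (n - r). g zs)"
    using r1 rn by simp
  also have "(\<Sum>ys\<in>LL A (r - 1). f ys) = W (r - 1) 1 u"
  proof -
    have eA: "A = {1..r - 1}" using r1 by (auto simp: A_def)
    show ?thesis unfolding W_def f_def eA by (rule refl)
  qed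
  also have "(\<Sum>zs\<in>LL B (n - r). g zs) = W (n - r) c u"
    unfolding B_def g_def by (rule SB_shift[OF rn])
  finally show ?thesis .
qed

lemma sum_LL_snoc:
  "(\<Sum>xs\<in>LL S (Suc k). f xs) = (\<Sum>xs\<in>LL S k. \<Sum>x\<in>S. f (xs @ [x]))"
proof -
  have inj: "inj_on (\<lambda>(xs, x). xs @ [x]) (LL S k \<times> S)"
    by (rule inj_onI) auto
  have img: "LL S (Suc k) = (\<lambda>(xs, x). xs @ [x]) ` (LL S k \<times> S)"
  proof (rule set_eqI)
    fix zs
    show "zs \<in> LL S (Suc k) \<longleftrightarrow> zs \<in> (\<lambda>(xs, x). xs @ [x]) ` (LL S k \<times> S)"
    proof
      assume z: "zs \<in> LL S (Suc k)"
      then have "zs \<noteq> []" by (auto simp: LL_def)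
      then have "zs = butlast zs @ [last zs]" by simp
      moreover have "(butlast zs, last zs) \<in> LL S k \<times> S"
        using z \<open>zs \<noteq> []\<close> by (auto simp: LL_def dest: in_set_butlastD)
      ultimately show "zs \<in> (\<lambda>(xs, x). xs @ [x]) ` (LL S k \<times> S)" by force
    next
      assume "zs \<in> (\<lambda>(xs, x). xs @ [x]) ` (LL S k \<times> S)"
      then show "zs \<in> LL S (Suc k)" by (auto simp: LL_def)
    qed
  qed
  have "(\<Sum>xs\<in>LL S (Suc k). f xs) = (\<Sum>p\<in>LL S k \<times> S. f (fst p @ [snd p]))"
    unfolding img by (subst sum.reindex[OF inj]) (auto intro!: sum.cong)
  also have "\<dots> = (\<Sum>xs\<in>LL S k. \<Sum>x\<in>S. f (xs @ [x]))"
    using sum.cartesian_product[of "\<lambda>xs x. f (xs @ [x])" S "LL S k"] by (simp add: case_prod_beta)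
  finally show ?thesis .
qed

lemma last_car:
  assumes n1: "1 \<le> n" and xs: "xs \<in> LL {1..n} (n - 1)" and v: "valid n {} xs"
  shows "(\<Sum>p\<in>{1..n}. if valid n {} (xs @ [p]) then wt n c u {} (xs @ [p]) else 0) =
         (\<Sum>r\<in>{1..n}. if r \<notin> set (park_spaces {} xs) then c * (u + of_nat (r - 1)) * wt n c u {} xs else (0::'a::comm_ring_1))"
proof -
  let ?O = "set (park_spaces {} xs)"
  have s0: "set xs \<subseteq> {1..}" using xs by (auto simp: LL_def)
  have s1: "?O \<subseteq> {1..}" by (rule ps_ge) (use s0 in simp_all)
  have Osub: "?O \<subseteq> {1..n}" using s1 v by (auto simp: valid_def)
  have cardO: "card ?O = n - 1"
    using ps_dist[of "{}" xs] xs by (simp add: distinct_card LL_def)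
  have "\<exists>r0. r0 \<in> {1..n} - ?O"
  proof (rule ccontr)
    assume "\<not> ?thesis"
    then have "{1..n} \<subseteq> ?O" by auto
    then have "card {1..n} \<le> card ?O" by (rule card_mono[rotated]) simp
    then show False using cardO n1 by simp
  qed
  then obtain r0 where r0: "r0 \<in> {1..n}" "r0 \<notin> ?O" by blast
  have Oeq: "?O = {1..n} - {r0}"
  proof (rule card_subset_eq)
    show "finite ({1..n} - {r0})" by simp
    show "?O \<subseteq> {1..n} - {r0}" using Osub r0 by auto
    show "card ?O = card ({1..n} - {r0})" using cardO r0 by simp
  qed
  have RHS: "(\<Sum>r\<in>{1..n}. if r \<notin> ?O then c * (u + of_nat (r - 1)) * wt n c u {} xs else 0) =
             c * (u + of_nat (r0 - 1)) * wt n c u {} xs"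
  proof -
    have "(\<Sum>r\<in>{1..n}. if r \<notin> ?O then c * (u + of_nat (r - 1)) * wt n c u {} xs else 0) =
          (\<Sum>r\<in>{1..n}. if r = r0 then c * (u + of_nat (r - 1)) * wt n c u {} xs else 0)"
      by (rule sum.cong[OF refl]) (auto simp: Oeq)
    also have "\<dots> = c * (u + of_nat (r0 - 1)) * wt n c u {} xs"
      using r0 by (simp add: sum.delta)
    finally show ?thesis .
  qed
  have fO: "finite ?O" by simp
  have trm: "(if valid n {} (xs @ [p]) then wt n c u {} (xs @ [p]) else 0) =
        (if p \<le> r0 then (if r0 = p then u else 1) * c * wt n c u {} xs else 0)" if p: "p \<in> {1..n}" for p
  proof -
    have vA: "valid n {} (xs @ [p]) = (nxt ?O p \<le> n)" using v by (simp add: valid_append valid_Cons)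
    have wA: "wt n c u {} (xs @ [p]) = wt n c u {} xs * ((if nxt ?O p = p then u else 1) * (if {nxt ?O p + 1..n} \<subseteq> ?O then c else 1))"
      by (simp add: wt_append)
    show ?thesis
    proof (cases "p \<le> r0")
      case True
      have nq: "nxt ?O p = r0"
        by (rule nxt_eqI) (use True r0 p in \<open>auto simp: Oeq\<close>)
      have cr: "{r0 + 1..n} \<subseteq> ?O" unfolding Oeq by auto
      show ?thesis
        unfolding vA wA nq using True r0 cr by (simp add: ac_simps)
    next
      case False
      have nq: "nxt ?O p = Suc n"
        by (rule nxt_eqI) (use False r0 p in \<open>auto simp: Oeq\<close>)
      show ?thesis
        unfolding vA nq using False by simp
    qed
  qed
  have "(\<Sum>p\<in>{1..n}. if valid n {} (xs @ [p]) then wt n c u {} (xs @ [p]) else 0) =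
        (\<Sum>p\<in>{1..n}. if p \<le> r0 then (if r0 = p then u else 1) * c * wt n c u {} xs else 0)"
    by (rule sum.cong[OF refl]) (rule trm)
  also have "\<dots> = (\<Sum>p\<in>{1..r0}. (if r0 = p then u else 1) * c * wt n c u {} xs)"
  proof -
    have "(\<Sum>p\<in>{1..n}. if p \<le> r0 then (if r0 = p then u else 1) * c * wt n c u {} xs else 0) =
          (\<Sum>p\<in>{p \<in> {1..n}. p \<le> r0}. (if r0 = p then u else 1) * c * wt n c u {} xs)"
      by (rule sum.inter_filter[symmetric]) simp
    also have "{p \<in> {1..n}. p \<le> r0} = {1..r0}" using r0 by auto
    finally show ?thesis .
  qed
  also have "\<dots> = (\<Sum>p\<in>{1..r0}. (if r0 = p then u else 1)) * (c * wt n c u {} xs)"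
    by (simp add: sum_distrib_right mult.assoc)
  also have "(\<Sum>p\<in>{1..r0}. (if r0 = p then u else 1)) = u + of_nat (r0 - 1)"
  proof -
    have e: "{1..r0} = insert r0 {1..<r0}" using r0 by auto
    have "(\<Sum>p\<in>{1..r0}. (if r0 = p then u else 1)) = u + (\<Sum>p\<in>{1..<r0}. (if r0 = p then u else 1))"
      unfolding e by (subst sum.insert) auto
    also have "(\<Sum>p\<in>{1..<r0}. (if r0 = p then u else 1)) = (\<Sum>p\<in>{1..<r0}. 1)"
      by (rule sum.cong) auto
    finally show ?thesis by simp
  qed
  finally show ?thesis using RHS by (simp add: ac_simps)
qed

theorem W_rec:
  assumes n1: "1 \<le> n"
  shows "W n c u = c * (\<Sum>r\<in>{1..n}. (u + of_nat (r - 1)) * of_nat ((n - 1) choose (r - 1)) * W (r - 1) 1 u * W (n - r) c (u::'a::comm_ring_1))"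
proof -
  let ?F = "\<lambda>P. if valid n {} P then wt n c u {} P else (0::'a)"
  let ?G = "\<lambda>r xs. if valid n {} xs \<and> r \<notin> set (park_spaces {} xs) then wt n c u {} xs else (0::'a)"
  have nn: "n = Suc (n - 1)" using n1 by simp
  have "W n c u = (\<Sum>xs\<in>LL {1..n} (n - 1). \<Sum>p\<in>{1..n}. ?F (xs @ [p]))"
    unfolding W_def by (subst nn) (rule sum_LL_snoc)
  also have "\<dots> = (\<Sum>xs\<in>LL {1..n} (n - 1). \<Sum>r\<in>{1..n}. c * (u + of_nat (r - 1)) * ?G r xs)"
  proof (rule sum.cong[OF refl])
    fix xs assume xs: "xs \<in> LL {1..n} (n - 1)"
    show "(\<Sum>p\<in>{1..n}. ?F (xs @ [p])) = (\<Sum>r\<in>{1..n}. c * (u + of_nat (r - 1)) * ?G r xs)"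
    proof (cases "valid n {} xs")
      case True
      show ?thesis unfolding last_car[OF n1 xs True] using True by (intro sum.cong) auto
    next
      case False
      then show ?thesis by (simp add: valid_append)
    qed
  qed
  also have "\<dots> = (\<Sum>r\<in>{1..n}. c * (u + of_nat (r - 1)) * (\<Sum>xs\<in>LL {1..n} (n - 1). ?G r xs))"
    by (subst sum.swap) (simp add: sum_distrib_left)
  also have "\<dots> = (\<Sum>r\<in>{1..n}. c * (u + of_nat (r - 1)) * (of_nat ((n - 1) choose (r - 1)) * W (r - 1) 1 u * W (n - r) c u))"
  proof (rule sum.cong[OF refl])
    fix r assume r: "r \<in> {1..n}"
    show "c * (u + of_nat (r - 1)) * (\<Sum>xs\<in>LL {1..n} (n - 1). ?G r xs) =
          c * (u + of_nat (r - 1)) * (of_nat ((n - 1) choose (r - 1)) * W (r - 1) 1 u * W (n - r) c u)"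
      using G_eq[of r n c u] r by simp
  qed
  finally show ?thesis by (simp add: sum_distrib_left ac_simps)
qed



lemma Hp_u: "(u + of_nat k) * Hp u u k = u * Ep u 0 k"
proof (cases k)
  case 0
  then show ?thesis by (simp add: Hp_def Ep_def)
next
  case (Suc k')
  have "Ep u 0 (Suc k') = Ep u u k' * (of_nat (Suc k') + u)" using PE1[of u 0 k'] by simp
  then show ?thesis unfolding Suc Hp_def by (simp add: ac_simps)
qed

theorem W_closed: "W n c u = Hp u (c * u) n"
proof (induction n arbitrary: c rule: less_induct)
  case (less n)
  show ?case
  proof (cases "n = 0")
    case True
    then show ?thesis by (simp add: W_def LL_0 Hp_def)
  next
    case False
    then have n1: "1 \<le> n" by simp
    have "W n c u = c * (\<Sum>r\<in>{1..n}. (u + of_nat (r - 1)) * of_nat ((n - 1) choose (r - 1)) * W (r - 1) 1 u * W (n - r) c u)"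
      by (rule W_rec[OF n1])
    also have "\<dots> = c * (\<Sum>k<n. (u + of_nat k) * of_nat ((n - 1) choose k) * W k 1 u * W (n - 1 - k) c u)"
      by (simp add: sum.atLeast1_atMost_eq)
    also have "\<dots> = c * (\<Sum>k<n. (u + of_nat k) * of_nat ((n - 1) choose k) * Hp u u k * Hp u (c * u) (n - 1 - k))"
    proof -
      have "(\<Sum>k<n. (u + of_nat k) * of_nat ((n - 1) choose k) * W k 1 u * W (n - 1 - k) c u) =
            (\<Sum>k<n. (u + of_nat k) * of_nat ((n - 1) choose k) * Hp u u k * Hp u (c * u) (n - 1 - k))"
      proof (rule sum.cong[OF refl])
        fix k assume k: "k \<in> {..<n}"
        have "W k 1 u = Hp u (1 * u) k" using k by (intro less.IH) auto
        moreover have "W (n - 1 - k) c u = Hp u (c * u) (n - 1 - k)" using k n1 by (intro less.IH) auto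
        ultimately show "(u + of_nat k) * of_nat ((n - 1) choose k) * W k 1 u * W (n - 1 - k) c u =
            (u + of_nat k) * of_nat ((n - 1) choose k) * Hp u u k * Hp u (c * u) (n - 1 - k)" by simp
      qed
      then show ?thesis by simp
    qed
    also have "\<dots> = c * u * (\<Sum>k\<le>n - 1. of_nat ((n - 1) choose k) * Ep u 0 k * Hp u (c * u) (n - 1 - k))"
    proof -
      have "(\<Sum>k<n. (u + of_nat k) * of_nat ((n - 1) choose k) * Hp u u k * Hp u (c * u) (n - 1 - k)) =
            (\<Sum>k<n. u * (of_nat ((n - 1) choose k) * Ep u 0 k * Hp u (c * u) (n - 1 - k)))"
      proof (rule sum.cong[OF refl])
        fix k
        have "(u + of_nat k) * of_nat ((n - 1) choose k) * Hp u u k * Hp u (c * u) (n - 1 - k) =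
              ((u + of_nat k) * Hp u u k) * (of_nat ((n - 1) choose k) * Hp u (c * u) (n - 1 - k))"
          by (simp only: ac_simps)
        also have "\<dots> = (u * Ep u 0 k) * (of_nat ((n - 1) choose k) * Hp u (c * u) (n - 1 - k))"
          by (simp only: Hp_u)
        finally show "(u + of_nat k) * of_nat ((n - 1) choose k) * Hp u u k * Hp u (c * u) (n - 1 - k) =
              u * (of_nat ((n - 1) choose k) * Ep u 0 k * Hp u (c * u) (n - 1 - k))"
          by (simp only: ac_simps)
      qed
      moreover have "{..<n} = {..n - 1}" using n1 by auto
      ultimately show ?thesis by (simp add: sum_distrib_left mult.assoc)
    qed
    also have "\<dots> = c * u * Ep u (c * u) (n - 1)"
      using Dl_zero[of u "c * u" "n - 1"] by (simp add: Dl_def)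
    also have "\<dots> = Hp u (c * u) n"
      using False by (simp add: Hp_def)
    finally show ?thesis .
  qed
qed

theorem corollary5p5:
  fixes c u :: "'a :: comm_ring_1" and n :: nat
  assumes "n \<ge> 1"
  shows "(\<Sum>P\<in>PF n. c ^ critic P * u ^ lucky P)
         = c * u * (\<Prod>i=1..n-1. of_nat i + of_nat (n - i) * u + c * u)"
proof -
  have "(\<Sum>P\<in>PF n. c ^ critic P * u ^ lucky P) = Hp u (c * u) n"
    by (simp add: lhs_W W_closed)
  also have "\<dots> = c * u * Ep u (c * u) (n - 1)"
    using assms by (simp add: Hp_def)
  also have "Ep u (c * u) (n - 1) = (\<Prod>i=1..n-1. of_nat i + of_nat (n - i) * u + c * u)"
  proof -
    have "(\<Prod>i=1..n-1. of_nat i + of_nat (n - i) * u + c * u) =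
          (\<Prod>i<n-1. of_nat (Suc i) + of_nat (n - Suc i) * u + c * u)"
      using prod.atLeast1_atMost_eq[of "\<lambda>i. of_nat i + of_nat (n - i) * u + c * u" "n - 1"] by simp
    also have "\<dots> = Ep u (c * u) (n - 1)"
      unfolding Ep_def by (rule prod.cong[OF refl]) (simp add: ac_simps)
    finally show ?thesis by simp
  qed
  finally show ?thesis .
qed

end
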